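(* Let $A$ be a finite poset and $t>0$ an integer, let $k$ be the least natural number with $2^k>\max(|A|-t,\,t-1)$, and define $$\langle A\rangle_t:=\Big(\big((A/C_{2^k-t})+C_{2^k}\big)/C_t\Big)+A$$ (all constituents disjoint, with a fresh copy of $A$ as the last summand). Then $g(\langle A\rangle_t)=2^{k+1}$ if $g(A)<t$, and $g(\langle A\rangle_t)=0$ if $g(A)\ge t$.
   Context: For a finite poset $P$ and $x\in P$ let $P_x:=\{y\in P: x\not\le y\}$. The g-number is $g(P):=\operatorname{mex}\{g(P_x):x\in P\}$, where mex is the least natural number not in the set ($g(\emptyset)=0$). $P+Q$ (parallel union) is the disjoint union with points of $P$ incomparable to points of $Q$; $P/Q$ (series union) is the disjoint union with orders kept and every point of $P$ above every point of $Q$. $C_m$ is the chain with $m$ points ($C_0=\emptyset$). *)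

theory Defs
  imports Main
begin

text \<open>A poset is represented as a pair (carrier, order relation); the relation
  only matters on the carrier.\<close>

type_synonym 'a poset = "'a set \<times> ('a \<Rightarrow> 'a \<Rightarrow> bool)"

definition finite_poset :: "'a poset \<Rightarrow> bool" where
  "finite_poset P \<longleftrightarrow> finite (fst P) \<and>
     (\<forall>x\<in>fst P. snd P x x) \<and>
     (\<forall>x\<in>fst P. \<forall>y\<in>fst P. snd P x y \<and> snd P y x \<longrightarrow> x = y) \<and>
     (\<forall>x\<in>fst P. \<forall>y\<in>fst P. \<forall>z\<in>fst P. snd P x y \<and> snd P y z \<longrightarrow> snd P x z)"

definition mex :: "nat set \<Rightarrow> nat" where
  "mex N = (LEAST n. n \<notin> N)"

definition Pdown :: "('a \<Rightarrow> 'a \<Rightarrow> bool) \<Rightarrow> 'a set \<Rightarrow> 'a \<Rightarrow> 'a set" where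
  "Pdown le S x = {y \<in> S. \<not> le x y}"

text \<open>g-number of the poset (S, le). The recursion ranges over x in S with le x x
  (always true in a poset); this guard only serves termination.\<close>
function gnum_aux :: "('a \<Rightarrow> 'a \<Rightarrow> bool) \<Rightarrow> 'a set \<Rightarrow> nat" where
  "gnum_aux le S = (if finite S then mex ((\<lambda>x. gnum_aux le (Pdown le S x)) ` {x \<in> S. le x x}) else 0)"
  by auto
termination
proof (relation "measure (\<lambda>(le, S). card S)")
  fix le :: "'a \<Rightarrow> 'a \<Rightarrow> bool" and S x
  assume "finite S" "x \<in> {x \<in> S. le x x}"
  then have "Pdown le S x \<subset> S" unfolding Pdown_def by auto
  with \<open>finite S\<close> show "((le, Pdown le S x), le, S) \<in> measure (\<lambda>(le, S). card S)"
    by (simp add: psubset_card_mono)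
qed auto

definition g :: "'a poset \<Rightarrow> nat" where
  "g P = gnum_aux (snd P) (fst P)"

definition par :: "'a poset \<Rightarrow> 'b poset \<Rightarrow> ('a + 'b) poset" where
  "par P Q = (Inl ` fst P \<union> Inr ` fst Q,
     (\<lambda>u v. case (u, v) of (Inl a, Inl b) \<Rightarrow> snd P a b
                         | (Inr a, Inr b) \<Rightarrow> snd Q a b
                         | _ \<Rightarrow> False))"

text \<open>Series union P / Q: every point of P above every point of Q.\<close>
definition ser :: "'a poset \<Rightarrow> 'b poset \<Rightarrow> ('a + 'b) poset" where
  "ser P Q = (Inl ` fst P \<union> Inr ` fst Q,
     (\<lambda>u v. case (u, v) of (Inl a, Inl b) \<Rightarrow> snd P a b
                         | (Inr a, Inr b) \<Rightarrow> snd Q a b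
                         | (Inr a, Inl b) \<Rightarrow> True
                         | (Inl a, Inr b) \<Rightarrow> False))"

definition chain :: "nat \<Rightarrow> nat poset" where
  "chain m = ({..<m}, (\<le>))"

definition angle :: "'a poset \<Rightarrow> nat \<Rightarrow> ((((('a + nat) + nat) + nat) + 'a) poset)" where
  "angle A t = (let k = (LEAST k. 2 ^ k > max (int (card (fst A)) - int t) (int t - 1)) in
     par (ser (par (ser A (chain (2 ^ k - t))) (chain (2 ^ k))) (chain t)) A)"

end

theory Submission
  imports Defs
begin
unbundle bit_operations_syntax
lemma and0: "(x::nat) < 2^k \<Longrightarrow> x AND 2^k = 0"
proof (rule bit_eqI)
  fix n assume "x < 2^k"
  then have "take_bit k x = x" by (simp add: take_bit_nat_eq_self)
  then have "\<not> bit x k" by (metis bit_take_bit_iff less_irrefl)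
  then show "bit (x AND 2^k) n = bit 0 n"
    by (auto simp: bit_and_iff bit_exp_iff)
qed
lemma x1: "(x::nat) < 2^k \<Longrightarrow> x XOR 2^k = x + 2^k"
  using and0 disjunctive_add_eq_xor by metis
lemma x2: "(x::nat) < 2^k \<Longrightarrow> (x + 2^k) XOR 2^k = x"
  by (simp flip: x1 add: xor.assoc)
lemma x3: "(a::nat) < 2^k \<Longrightarrow> (2^k + a) XOR a = 2^k"
proof -
  assume "a < 2^k"
  then have "2^k + a = a XOR 2^k" using x1 by (simp add: add.commute)
  then have "(2^k + a) XOR a = a XOR (a XOR 2^k)" by (simp add: xor.commute)
  also have "\<dots> = 2^k" by (simp flip: xor.assoc)
  finally show ?thesis .
qed
lemma nim: "(c::nat) < a XOR b \<Longrightarrow> c XOR b < a \<or> c XOR a < b"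
proof (induction c arbitrary: a b rule: less_induct)
  case (less c)
  show ?case
  proof (cases "c = 0")
    case True
    then have "a \<noteq> b" using less.prems by auto
    then show ?thesis using True by auto
  next
    case False
    define a' where "a' = a div 2"
    define b' where "b' = b div 2"
    define c' where "c' = c div 2"
    have ea: "a = a mod 2 + 2 * a'" "b = b mod 2 + 2 * b'" "c = c mod 2 + 2 * c'"
      by (simp_all add: a'_def b'_def c'_def)
    have xab: "a XOR b = of_bool (odd a \<noteq> odd b) + 2 * (a' XOR b')"
      using xor_nat_rec a'_def b'_def by blast
    have xcb: "c XOR b = of_bool (odd c \<noteq> odd b) + 2 * (c' XOR b')"
      using xor_nat_rec c'_def b'_def by blast
    have xca: "c XOR a = of_bool (odd c \<noteq> odd a) + 2 * (c' XOR a')"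
      using xor_nat_rec c'_def a'_def by blast
    have cc: "c' < c" using False c'_def by simp
    have m2: "x mod 2 \<le> 1" for x :: nat by simp
    have cases: "c' < a' XOR b' \<or> (c' = a' XOR b' \<and> even c \<and> odd a \<noteq> odd b)"
    proof (cases "c' < a' XOR b'")
      case True then show ?thesis by simp
    next
      case False note n = this
      have lt: "c mod 2 + 2 * c' < of_bool (odd a \<noteq> odd b) + 2 * (a' XOR b')"
        using less.prems ea(3) xab by simp
      have ob: "of_bool (odd a \<noteq> odd b) \<le> (1::nat)" by simp
      have "c' = a' XOR b'" using n lt ob m2[of c] by linarith
      moreover have "c mod 2 = 0" using n lt ob m2[of c] by linarith
      moreover have "of_bool (odd a \<noteq> odd b) = (1::nat)" using n lt ob m2[of c] by linarith
      ultimately show ?thesis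
        by (cases "odd a \<noteq> odd b") auto
    qed
    consider "c' < a' XOR b'" | "c' = a' XOR b'" "even c" "odd a \<noteq> odd b"
      using cases by blast
    then show ?thesis
    proof cases
      case 1
      from less.IH[OF cc 1] show ?thesis
      proof
        assume "c' XOR b' < a'"
        then have "c XOR b < a" using xcb ea(1) m2[of a] by (cases "odd c \<noteq> odd b"; simp)
        then show ?thesis ..
      next
        assume "c' XOR a' < b'"
        then have "c XOR a < b" using xca ea(2) m2[of b] by (cases "odd c \<noteq> odd a"; simp)
        then show ?thesis ..
      qed
    next
      case 2
      have "c' XOR b' = a'" using 2(1) by (simp add: xor.assoc)
      moreover have "c' XOR a' = b'"
      proof -
        have "c' XOR a' = a' XOR (a' XOR b')" using 2(1) by (simp add: xor.commute)
        also have "\<dots> = b'" by (simp flip: xor.assoc)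
        finally show ?thesis .
      qed
      moreover have "odd x \<Longrightarrow> x mod 2 = 1" for x :: nat by presburger
      ultimately show ?thesis using 2 xcb xca ea(1,2) by (cases "odd a"; auto)
    qed
  qed
qed
declare gnum_aux.simps[simp del]

lemma gnum_unf: "finite S \<Longrightarrow> gnum_aux le S = mex ((\<lambda>x. gnum_aux le (Pdown le S x)) ` {x \<in> S. le x x})"
  by (subst gnum_aux.simps) simp

lemma mex_eqI: "n \<notin> N \<Longrightarrow> (\<And>m. m < n \<Longrightarrow> m \<in> N) \<Longrightarrow> mex N = n"
  unfolding mex_def by (rule Least_equality) (auto simp: not_less[symmetric])

lemma mex_notin: "finite N \<Longrightarrow> mex N \<notin> N"
  unfolding mex_def by (rule LeastI_ex) (use ex_new_if_finite[OF infinite_UNIV_nat] in auto)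

lemma mex_less: "m < mex N \<Longrightarrow> m \<in> N"
  unfolding mex_def using not_less_Least by blast

lemma mex_le: "n \<notin> N \<Longrightarrow> mex N \<le> n"
  unfolding mex_def by (rule Least_le)

lemma Pdown_sub: "finite S \<Longrightarrow> x \<in> S \<Longrightarrow> le x x \<Longrightarrow> card (Pdown le S x) < card S"
  unfolding Pdown_def by (rule psubset_card_mono) auto

lemma Pdown_fin: "finite S \<Longrightarrow> finite (Pdown le S x)"
  unfolding Pdown_def by auto

lemma gnum_le_card: "finite S \<Longrightarrow> gnum_aux le S \<le> card S"
proof (induction "card S" arbitrary: S rule: less_induct)
  case less
  have "card S \<notin> (\<lambda>x. gnum_aux le (Pdown le S x)) ` {x \<in> S. le x x}"
  proof
    assume "card S \<in> (\<lambda>x. gnum_aux le (Pdown le S x)) ` {x \<in> S. le x x}"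
    then obtain x where x: "x \<in> S" "le x x" "card S = gnum_aux le (Pdown le S x)" by auto
    have "gnum_aux le (Pdown le S x) \<le> card (Pdown le S x)"
      using less.hyps Pdown_sub[of S x le, OF less.prems x(1,2)] Pdown_fin[OF less.prems] by blast
    with Pdown_sub[of S x le, OF less.prems x(1,2)] x(3) show False by simp
  qed
  then have "mex ((\<lambda>x. gnum_aux le (Pdown le S x)) ` {x \<in> S. le x x}) \<le> card S" by (rule mex_le)
  then show ?case using gnum_unf[OF less.prems] by simp
qed

lemma gnum_transport:
  assumes "finite S" "inj_on f S" "\<And>x y. x \<in> S \<Longrightarrow> y \<in> S \<Longrightarrow> le' (f x) (f y) = le x y"
  shows "gnum_aux le' (f ` S) = gnum_aux le S"
  using assms
proof (induction "card S" arbitrary: S rule: less_induct)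
  case less
  have pd: "Pdown le' (f ` S) (f x) = f ` Pdown le S x" if "x \<in> S" for x
    using less.prems(3) that unfolding Pdown_def by auto
  have dom: "{u \<in> f ` S. le' u u} = f ` {x \<in> S. le x x}" using less.prems(3) by auto
  have "(\<lambda>u. gnum_aux le' (Pdown le' (f ` S) u)) ` {u \<in> f ` S. le' u u}
      = (\<lambda>x. gnum_aux le (Pdown le S x)) ` {x \<in> S. le x x}"
    unfolding dom image_image
  proof (rule image_cong[OF refl])
    fix x assume x: "x \<in> {x \<in> S. le x x}"
    have "gnum_aux le' (f ` Pdown le S x) = gnum_aux le (Pdown le S x)"
      apply (rule less.hyps)
      using x Pdown_sub[OF less.prems(1)] Pdown_fin[OF less.prems(1)] less.prems(2,3)
      by (auto simp: Pdown_def intro: inj_on_subset)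
    then show "gnum_aux le' (Pdown le' (f ` S) (f x)) = gnum_aux le (Pdown le S x)"
      using pd x by simp
  qed
  then show ?case using gnum_unf[of "f ` S" le'] gnum_unf[of S le] less.prems(1) by simp
qed

lemma gnum_chain: "gnum_aux (\<le>) {..<m::nat} = m"
proof (induction m rule: less_induct)
  case (less m)
  have pd: "Pdown (\<le>) {..<m} x = {..<x}" if "x < m" for x
    using that unfolding Pdown_def by auto
  have "(\<lambda>x. gnum_aux (\<le>) (Pdown (\<le>) {..<m} x)) ` {x \<in> {..<m}. x \<le> x} = {..<m}"
    using pd less.IH by (auto simp: image_iff)
  then show ?case using gnum_unf[of "{..<m}"] mex_eqI[of m "{..<m}"] by simp
qed

definition serR :: "('a \<Rightarrow> 'a \<Rightarrow> bool) \<Rightarrow> ('b \<Rightarrow> 'b \<Rightarrow> bool) \<Rightarrow> 'a + 'b \<Rightarrow> 'a + 'b \<Rightarrow> bool" where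
  "serR p q = (\<lambda>u v. case (u, v) of (Inl a, Inl b) \<Rightarrow> p a b
                         | (Inr a, Inr b) \<Rightarrow> q a b
                         | (Inr a, Inl b) \<Rightarrow> True
                         | (Inl a, Inr b) \<Rightarrow> False)"

definition parR :: "('a \<Rightarrow> 'a \<Rightarrow> bool) \<Rightarrow> ('b \<Rightarrow> 'b \<Rightarrow> bool) \<Rightarrow> 'a + 'b \<Rightarrow> 'a + 'b \<Rightarrow> bool" where
  "parR p q = (\<lambda>u v. case (u, v) of (Inl a, Inl b) \<Rightarrow> p a b
                         | (Inr a, Inr b) \<Rightarrow> q a b
                         | _ \<Rightarrow> False)"

lemma ser_eq: "ser P Q = (Inl ` fst P \<union> Inr ` fst Q, serR (snd P) (snd Q))"
  by (simp add: ser_def serR_def)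
lemma par_eq: "par P Q = (Inl ` fst P \<union> Inr ` fst Q, parR (snd P) (snd Q))"
  by (simp add: par_def parR_def)

lemma serR_simps[simp]: "serR p q (Inl a) (Inl b) = p a b" "serR p q (Inr c) (Inr d) = q c d"
  "serR p q (Inr c) (Inl b) = True" "serR p q (Inl a) (Inr d) = False"
  by (simp_all add: serR_def)
lemma parR_simps[simp]: "parR p q (Inl a) (Inl b) = p a b" "parR p q (Inr c) (Inr d) = q c d"
  "parR p q (Inr c) (Inl b) = False" "parR p q (Inl a) (Inr d) = False"
  by (simp_all add: parR_def)

lemma gnum_ser_chain:
  assumes "finite S"
  shows "gnum_aux (serR le (\<le>)) (Inl ` S \<union> Inr ` {..<t::nat}) = t + gnum_aux le S"
  using assms
proof (induction "card S" arbitrary: S rule: less_induct)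
  case less
  let ?R = "serR le ((\<le>)::nat\<Rightarrow>nat\<Rightarrow>bool)"
  let ?U = "Inl ` S \<union> Inr ` {..<t}"
  let ?N = "(\<lambda>x. gnum_aux le (Pdown le S x)) ` {x \<in> S. le x x}"
  have dom: "{u \<in> ?U. ?R u u} = Inl ` {x \<in> S. le x x} \<union> Inr ` {..<t}" by auto
  have pdl: "Pdown ?R ?U (Inl x) = Inl ` Pdown le S x \<union> Inr ` {..<t}" for x
    unfolding Pdown_def by auto
  have pdr: "j < t \<Longrightarrow> Pdown ?R ?U (Inr j) = Inr ` {..<j}" for j
    unfolding Pdown_def by auto
  have valr: "gnum_aux ?R (Inr ` {..<j}) = j" for j
    using gnum_transport[of "{..<j}" Inr ?R "(\<le>)"] gnum_chain by simp
  have vall: "gnum_aux ?R (Pdown ?R ?U (Inl x)) = t + gnum_aux le (Pdown le S x)"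
    if "x \<in> S" "le x x" for x
    unfolding pdl using less.hyps[of "Pdown le S x"] Pdown_sub[of S x le] Pdown_fin[of S le x]
      less.prems that by simp
  have V: "(\<lambda>u. gnum_aux ?R (Pdown ?R ?U u)) ` {u \<in> ?U. ?R u u} = (\<lambda>v. t + v) ` ?N \<union> {..<t}"
    unfolding dom image_Un image_image using vall pdr valr
    by (auto simp: image_iff)
  have fN: "finite ?N" using less.prems by simp
  have "mex ((\<lambda>v. t + v) ` ?N \<union> {..<t}) = t + mex ?N"
  proof (rule mex_eqI)
    show "t + mex ?N \<notin> (\<lambda>v. t + v) ` ?N \<union> {..<t}"
      using mex_notin[OF fN] by auto
  next
    fix m assume m: "m < t + mex ?N"
    show "m \<in> (\<lambda>v. t + v) ` ?N \<union> {..<t}"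
    proof (cases "m < t")
      case False
      then have "m - t \<in> ?N" using mex_less[of "m - t" ?N] m by simp
      then have "t + (m - t) \<in> (\<lambda>v. t + v) ` ?N" by blast
      then show ?thesis using False by simp
    qed simp
  qed
  then show ?case using V gnum_unf[of ?U ?R] gnum_unf[of S le] less.prems by simp
qed

lemma gnum_par:
  assumes "finite S" "finite T"
  shows "gnum_aux (parR p q) (Inl ` S \<union> Inr ` T) = gnum_aux p S XOR gnum_aux q T"
  using assms
proof (induction "card S + card T" arbitrary: S T rule: less_induct)
  case less
  let ?R = "parR p q"
  let ?U = "Inl ` S \<union> Inr ` T"
  let ?Na = "(\<lambda>x. gnum_aux p (Pdown p S x)) ` {x \<in> S. p x x}"
  let ?Nb = "(\<lambda>x. gnum_aux q (Pdown q T x)) ` {x \<in> T. q x x}"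
  define a where "a = gnum_aux p S"
  define b where "b = gnum_aux q T"
  have a: "a = mex ?Na" using a_def gnum_unf less.prems by blast
  have b: "b = mex ?Nb" using b_def gnum_unf less.prems by blast
  have dom: "{u \<in> ?U. ?R u u} = Inl ` {x \<in> S. p x x} \<union> Inr ` {x \<in> T. q x x}" by auto
  have pdl: "Pdown ?R ?U (Inl x) = Inl ` Pdown p S x \<union> Inr ` T" for x
    unfolding Pdown_def by auto
  have pdr: "Pdown ?R ?U (Inr y) = Inl ` S \<union> Inr ` Pdown q T y" for y
    unfolding Pdown_def by auto
  have vall: "gnum_aux ?R (Pdown ?R ?U (Inl x)) = gnum_aux p (Pdown p S x) XOR b"
    if "x \<in> S" "p x x" for x
    unfolding pdl b_def using less.hyps[of "Pdown p S x" T] Pdown_sub[of S x p] Pdown_fin[of S p x]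
      less.prems that by simp
  have valr: "gnum_aux ?R (Pdown ?R ?U (Inr y)) = a XOR gnum_aux q (Pdown q T y)"
    if "y \<in> T" "q y y" for y
    unfolding pdr a_def using less.hyps[of S "Pdown q T y"] Pdown_sub[of T y q] Pdown_fin[of T q y]
      less.prems that by simp
  have V: "(\<lambda>u. gnum_aux ?R (Pdown ?R ?U u)) ` {u \<in> ?U. ?R u u}
      = (\<lambda>v. v XOR b) ` ?Na \<union> (\<lambda>v. a XOR v) ` ?Nb"
    unfolding dom image_Un image_image using vall valr
    by (auto simp: image_iff)
  have fa: "finite ?Na" and fb: "finite ?Nb" using less.prems by simp_all
  have "mex ((\<lambda>v. v XOR b) ` ?Na \<union> (\<lambda>v. a XOR v) ` ?Nb) = a XOR b"
  proof (rule mex_eqI)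
    have c1: "v XOR b = a XOR b \<Longrightarrow> v = a" for v :: nat
      by (metis xor.assoc xor_self_eq xor.right_neutral)
    have c2: "a XOR v = a XOR b \<Longrightarrow> v = b" for v :: nat
      by (metis xor.assoc xor.commute xor_self_eq xor.right_neutral)
    show "a XOR b \<notin> (\<lambda>v. v XOR b) ` ?Na \<union> (\<lambda>v. a XOR v) ` ?Nb"
    proof
      assume "a XOR b \<in> (\<lambda>v. v XOR b) ` ?Na \<union> (\<lambda>v. a XOR v) ` ?Nb"
      then consider v where "v \<in> ?Na" "a XOR b = v XOR b" | v where "v \<in> ?Nb" "a XOR b = a XOR v"
        by blast
      then show False
      proof cases
        case 1
        then have "v = a" using c1 by metis
        then show False using 1(1) mex_notin[OF fa] a by simp
      next
        case 2
        then have "v = b" using c2 by metis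
        then show False using 2(1) mex_notin[OF fb] b by simp
      qed
    qed
  next
    fix c assume c: "c < a XOR b"
    show "c \<in> (\<lambda>v. v XOR b) ` ?Na \<union> (\<lambda>v. a XOR v) ` ?Nb"
      using nim[OF c]
    proof
      assume "c XOR b < a"
      then have "c XOR b \<in> ?Na" using a mex_less by metis
      moreover have "c = (c XOR b) XOR b" by (simp add: xor.assoc)
      ultimately show ?thesis by blast
    next
      assume "c XOR a < b"
      then have "c XOR a \<in> ?Nb" using b mex_less by metis
      moreover have "c = a XOR (c XOR a)"
      proof -
        have "a XOR (c XOR a) = a XOR (a XOR c)" by (simp add: xor.commute)
        also have "\<dots> = c" by (simp flip: xor.assoc)
        finally show ?thesis by simp
      qed
      ultimately show ?thesis by blast
    qed
  qed
  then show ?case using V gnum_unf[of ?U ?R] less.prems a b a_def b_def by simp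
qed

lemma g_par: "finite (fst P) \<Longrightarrow> finite (fst Q) \<Longrightarrow> g (par P Q) = g P XOR g Q"
  unfolding par_eq g_def using gnum_par by simp
lemma g_ser_chain: "finite (fst P) \<Longrightarrow> g (ser P (chain t)) = t + g P"
  unfolding ser_eq g_def chain_def using gnum_ser_chain by simp
lemma g_chain: "g (chain m) = m"
  unfolding g_def chain_def using gnum_chain by simp
lemma fin_par: "finite (fst P) \<Longrightarrow> finite (fst Q) \<Longrightarrow> finite (fst (par P Q))"
  unfolding par_eq by simp
lemma fin_ser: "finite (fst P) \<Longrightarrow> finite (fst Q) \<Longrightarrow> finite (fst (ser P Q))"
  unfolding ser_eq by simp
lemma fin_chain: "finite (fst (chain m))"
  unfolding chain_def by simp

theorem mainTheorem8:
  fixes A :: "'a poset" and t :: nat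
  assumes "finite_poset A" and "0 < t"
  defines "k \<equiv> (LEAST k::nat. 2 ^ k > max (int (card (fst A)) - int t) (int t - 1))"
  shows "(g A < t \<longrightarrow> g (angle A t) = 2 ^ (k + 1)) \<and>
         (t \<le> g A \<longrightarrow> g (angle A t) = 0)"
proof -
  have fA: "finite (fst A)" using assms(1) unfolding finite_poset_def by simp
  define K :: nat where "K = 2 ^ k"
  have ex: "\<exists>k::nat. (2::int) ^ k > max (int (card (fst A)) - int t) (int t - 1)"
  proof
    let ?n = "card (fst A) + t"
    have "?n < 2 ^ ?n" by (rule less_exp)
    then have "int ?n < int (2 ^ ?n)" by (simp only: of_nat_less_iff)
    then have "int ?n < 2 ^ ?n" by simp
    then show "(2::int) ^ ?n > max (int (card (fst A)) - int t) (int t - 1)" by simp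
  qed
  have "(2::int) ^ k > max (int (card (fst A)) - int t) (int t - 1)"
    unfolding k_def by (rule LeastI_ex[OF ex])
  then have h1: "int t - 1 < 2^k" and h2: "int (card (fst A)) - int t < 2^k" by auto
  have e: "(2::int)^k = int K" by (simp add: K_def)
  have K1: "t \<le> K" using h1 e by linarith
  have K2: "card (fst A) < K + t" using h2 e by linarith
  have aA: "g A \<le> card (fst A)" unfolding g_def using gnum_le_card fA by blast
  have ang: "angle A t = par (ser (par (ser A (chain (K - t))) (chain K)) (chain t)) A"
    unfolding angle_def K_def k_def Let_def by simp
  have gX: "g (ser (par (ser A (chain (K - t))) (chain K)) (chain t)) = t + ((K - t + g A) XOR K)"
    by (simp add: g_ser_chain g_par g_chain fin_par fin_ser fin_chain fA)
  have gang: "g (angle A t) = (t + ((K - t + g A) XOR K)) XOR g A"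
    unfolding ang by (simp add: gX g_par fin_par fin_ser fin_chain fA)
  show ?thesis
  proof (intro conjI impI)
    assume lt: "g A < t"
    have "(K - t + g A) XOR K = K - t + g A + K" unfolding K_def
      by (rule x1) (use lt K1 in \<open>simp add: K_def\<close>)
    then have "t + ((K - t + g A) XOR K) = 2 ^ (k + 1) + g A" using K1 lt by (simp add: K_def)
    moreover have "g A < 2 ^ (k+1)" using lt K1 by (simp add: K_def)
    ultimately show "g (angle A t) = 2 ^ (k + 1)" using gang x3[of "g A" "k+1"] by simp
  next
    assume ge: "t \<le> g A"
    have "K - t + g A = (g A - t) + K" using ge K1 by simp
    moreover have "g A - t < 2 ^ k" using aA K2 ge unfolding K_def by linarith
    ultimately have "(K - t + g A) XOR K = g A - t" using x2 K_def by simp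
    then show "g (angle A t) = 0" using gang ge by simp
  qed
qed

end
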